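(* For a chemical reaction network satisfying (H1) and (H2): (1) the constant monomial does not appear in any derivative $x^{(\ell)}$, $\ell\ge1$, of any species $X$; (2) if $X$ is a non-intermediate species and $\ell\ge1$, every monomial of degree 1 appearing in $x^{(\ell)}$ is of the form $w$ for an intermediate species $W\in\mathscr{W}_X$, i.e., the only degree-one monomials of $x^{(\ell)}$ are among those appearing in $\dot x$.
   Context: Species are capital letters, concentrations lower-case letters. A reaction network has reactions $y\to y'$ between complexes with rate constants $k_{yy'}>0$ (vector $\mathbf{k}$); mass-action system $\dot{\mathbf{x}}=\sum k_{yy'}\mathbf{x}^y(y'-y)$. Total derivative of a polynomial: $\dot\varphi=\sum_i\frac{\partial\varphi}{\partial x_i}\dot x_i$ with $\dot x_i$ replaced by the right-hand side; $\varphi^{(\ell)}$ its $\ell$-th iterate, a polynomial in the concentration variables with coefficients polynomial in $\mathbf{k}$. A monomial "appears in" $\varphi^{(\ell)}$ if its coefficient is a nonzero polynomial in $\mathbf{k}$. (H1) Every connected component has the form $Y+S_0\rightleftarrows U_1\to Y+S_1\rightleftarrows\cdots\rightleftarrows U_L\to Y+S_L$ (reactions $Y+S_{j-1}\to U_j$, $U_j\to Y+S_{j-1}$, $U_j\to Y+S_j$), unique enzyme $Y$; intermediate species ($U_j$) distinct throughout the network; non-intermediates of a component pairwise distinct but may appear in other components; each complex in a unique component. $\mathscr{S}_U$ = substrates/products of the component of intermediate $U$. (H2) A partition $\mathscr{S}^{(0)}\sqcup\cdots\sqcup\mathscr{S}^{(M)}$ ($M\ge2$, nonempty, $\mathscr{S}^{(0)}$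 the intermediates) with: for each intermediate $U$ with enzyme $Y$, some $\alpha\ge1$ has $\mathscr{S}_U\subseteq\mathscr{S}^{(\alpha)}$, $Y\notin\mathscr{S}^{(\alpha)}$. An intermediate $U$ reacts to a non-intermediate $X_1$ if there is a reaction $U\to X_1+X_2$ with $X_2$ non-intermediate. $\mathscr{W}_X$ = set of intermediates that react to $X$. *)

theory Defs
  imports "HOL-Library.Poly_Mapping"
begin

text \<open>A reaction is a pair (y, y') of complexes; it is also the index of its rate
constant.  The rate constants are polynomial variables, so coefficients
live in the integer polynomial ring in the rate-constant variables.\<close>

type_synonym 's cplx = "'s \<Rightarrow>\<^sub>0 nat"
type_synonym 's rxn = "'s cplx \<times> 's cplx"
type_synonym 's kpoly = "('s rxn \<Rightarrow>\<^sub>0 nat) \<Rightarrow>\<^sub>0 int"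
type_synonym 's xpoly = "('s \<Rightarrow>\<^sub>0 nat) \<Rightarrow>\<^sub>0 's kpoly"
  \<comment> \<open>polynomials in the concentrations, coefficients polynomial in k\<close>

definition xvar :: "'s \<Rightarrow> 's xpoly" where
  "xvar X = Poly_Mapping.single (Poly_Mapping.single X 1) 1"

definition pdiff :: "'s \<Rightarrow> 's xpoly \<Rightarrow> 's xpoly" where
  "pdiff i p = (\<Sum>m\<in>Poly_Mapping.keys p. Poly_Mapping.single (m - Poly_Mapping.single i 1)
                   (Poly_Mapping.lookup p m * of_nat (Poly_Mapping.lookup m i)))"

text \<open>Mass-action right-hand side for species i:
  sum over reactions y -> y' of k_{yy'} x^y (y'_i - y_i).\<close>
definition rhs :: "'s rxn set \<Rightarrow> 's \<Rightarrow> 's xpoly" where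
  "rhs R i = (\<Sum>r\<in>R. Poly_Mapping.single (fst r)
       (Poly_Mapping.single (Poly_Mapping.single r 1)
          (int (Poly_Mapping.lookup (snd r) i) - int (Poly_Mapping.lookup (fst r) i))))"

definition tdiff :: "'s set \<Rightarrow> 's rxn set \<Rightarrow> 's xpoly \<Rightarrow> 's xpoly" where
  "tdiff S R p = (\<Sum>i\<in>S. pdiff i p * rhs R i)"

definition appears :: "('s \<Rightarrow>\<^sub>0 nat) \<Rightarrow> 's xpoly \<Rightarrow> bool" where
  "appears \<mu> p \<longleftrightarrow> Poly_Mapping.lookup p \<mu> \<noteq> 0"

definition mdeg :: "('s \<Rightarrow>\<^sub>0 nat) \<Rightarrow> nat" where
  "mdeg \<mu> = (\<Sum>s\<in>Poly_Mapping.keys \<mu>. Poly_Mapping.lookup \<mu> s)"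

text \<open>A component is (Y, [S_0,...,S_L], [U_1,...,U_L]).\<close>
type_synonym 's comp = "'s \<times> 's list \<times> 's list"

definition sp :: "'s \<Rightarrow> 's cplx" where "sp X = Poly_Mapping.single X 1"

definition comp_reactions :: "'s comp \<Rightarrow> 's rxn set" where
  "comp_reactions c = (case c of (Y, Ss, Us) \<Rightarrow>
     (\<Union>j<length Us.
        {(sp Y + sp (Ss!j), sp (Us!j)), (sp (Us!j), sp Y + sp (Ss!j)),
         (sp (Us!j), sp Y + sp (Ss!Suc j))}))"

definition comp_complexes :: "'s comp \<Rightarrow> 's cplx set" where
  "comp_complexes c = (case c of (Y, Ss, Us) \<Rightarrow>
     {sp Y + sp (Ss!j) | j. j < length Ss} \<union> {sp (Us!j) | j. j < length Us})"

definition comp_enz :: "'s comp \<Rightarrow> 's" where "comp_enz c = fst c"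
definition comp_subs :: "'s comp \<Rightarrow> 's list" where "comp_subs c = fst (snd c)"
definition comp_ints :: "'s comp \<Rightarrow> 's list" where "comp_ints c = snd (snd c)"

definition intermediates :: "'s comp set \<Rightarrow> 's set" where
  "intermediates CC = (\<Union>c\<in>CC. set (comp_ints c))"

definition nonintermediates :: "'s comp set \<Rightarrow> 's set" where
  "nonintermediates CC = (\<Union>c\<in>CC. insert (comp_enz c) (set (comp_subs c)))"

definition net_species :: "'s comp set \<Rightarrow> 's set" where
  "net_species CC = intermediates CC \<union> nonintermediates CC"

definition H1 :: "'s rxn set \<Rightarrow> 's comp set \<Rightarrow> bool" where
  "H1 R CC \<longleftrightarrow>
     finite CC \<and> R = (\<Union>c\<in>CC. comp_reactions c) \<and>
     (\<forall>c\<in>CC. length (comp_ints c) \<ge> 1 \<and>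
              length (comp_subs c) = Suc (length (comp_ints c)) \<and>
              distinct (comp_enz c # comp_subs c) \<and>
              distinct (comp_ints c)) \<and>
     (\<forall>c\<in>CC. \<forall>c'\<in>CC. c \<noteq> c' \<longrightarrow> set (comp_ints c) \<inter> set (comp_ints c') = {}) \<and>
     intermediates CC \<inter> nonintermediates CC = {} \<and>
     (\<forall>c\<in>CC. \<forall>c'\<in>CC. c \<noteq> c' \<longrightarrow> comp_complexes c \<inter> comp_complexes c' = {})"

text \<open>Partition S^(0),...,S^(M) given as a function P on indices 0..M.\<close>
definition H2 :: "'s comp set \<Rightarrow> nat \<Rightarrow> (nat \<Rightarrow> 's set) \<Rightarrow> bool" where
  "H2 CC M P \<longleftrightarrow>
     M \<ge> 2 \<and>
     (\<forall>\<alpha>\<le>M. P \<alpha> \<noteq> {}) \<and>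
     (\<forall>\<alpha>\<le>M. \<forall>\<beta>\<le>M. \<alpha> \<noteq> \<beta> \<longrightarrow> P \<alpha> \<inter> P \<beta> = {}) \<and>
     (\<Union>\<alpha>\<le>M. P \<alpha>) = net_species CC \<and>
     P 0 = intermediates CC \<and>
     (\<forall>c\<in>CC. \<forall>U\<in>set (comp_ints c). \<exists>\<alpha>. 1 \<le> \<alpha> \<and> \<alpha> \<le> M \<and>
          set (comp_subs c) \<subseteq> P \<alpha> \<and> comp_enz c \<notin> P \<alpha>)"

definition W_set :: "'s rxn set \<Rightarrow> 's comp set \<Rightarrow> 's \<Rightarrow> 's set" where
  "W_set R CC X = {U \<in> intermediates CC. \<exists>X2 \<in> nonintermediates CC.
                     (sp U, sp X + sp X2) \<in> R}"

end

theory Submission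
  imports Defs
begin

lemma keys_pdiff:
  assumes "m \<in> Poly_Mapping.keys (pdiff i p)"
  shows "\<exists>m'\<in>Poly_Mapping.keys p. Poly_Mapping.lookup m' i \<noteq> 0 \<and> m = m' - sp i"
proof -
  have "m \<in> (\<Union>m'\<in>Poly_Mapping.keys p. Poly_Mapping.keys (Poly_Mapping.single (m' - Poly_Mapping.single i 1)
                   (Poly_Mapping.lookup p m' * of_nat (Poly_Mapping.lookup m' i))))"
    using keys_sum assms unfolding pdiff_def by (rule subsetD)
  then obtain m' where "m' \<in> Poly_Mapping.keys p" and "m \<in> Poly_Mapping.keys (Poly_Mapping.single (m' - Poly_Mapping.single i 1)
                   (Poly_Mapping.lookup p m' * of_nat (Poly_Mapping.lookup m' i)))" by blast
  then show ?thesis unfolding sp_def by (cases "Poly_Mapping.lookup m' i = 0") (auto split: if_splits)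
qed

lemma keys_rhs:
  assumes "m \<in> Poly_Mapping.keys (rhs R i)"
  shows "\<exists>r\<in>R. m = fst r \<and> Poly_Mapping.lookup (snd r) i \<noteq> Poly_Mapping.lookup (fst r) i"
proof -
  have "m \<in> (\<Union>r\<in>R. Poly_Mapping.keys (Poly_Mapping.single (fst r)
       (Poly_Mapping.single (Poly_Mapping.single r (1::nat))
          (int (Poly_Mapping.lookup (snd r) i) - int (Poly_Mapping.lookup (fst r) i)))))"
    using keys_sum[of "\<lambda>r. Poly_Mapping.single (fst r)
       (Poly_Mapping.single (Poly_Mapping.single r (1::nat))
          (int (Poly_Mapping.lookup (snd r) i) - int (Poly_Mapping.lookup (fst r) i)))" R] assms
    unfolding rhs_def by (rule subsetD)
  then obtain r where "r \<in> R" "m \<in> Poly_Mapping.keys (Poly_Mapping.single (fst r)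
       (Poly_Mapping.single (Poly_Mapping.single r (1::nat))
          (int (Poly_Mapping.lookup (snd r) i) - int (Poly_Mapping.lookup (fst r) i))))" by blast
  then show ?thesis by (cases "Poly_Mapping.lookup (snd r) i = Poly_Mapping.lookup (fst r) i") (auto split: if_splits)
qed

lemma keys_tdiff:
  assumes "m \<in> Poly_Mapping.keys (tdiff S R p)"
  shows "\<exists>i\<in>S. \<exists>m1 m2. m = m1 + m2 \<and> m1 \<in> Poly_Mapping.keys (pdiff i p) \<and> m2 \<in> Poly_Mapping.keys (rhs R i)"
proof -
  have "m \<in> (\<Union>i\<in>S. Poly_Mapping.keys (pdiff i p * rhs R i))"
    using keys_sum[of "\<lambda>i. pdiff i p * rhs R i" S] assms unfolding tdiff_def by (rule subsetD)
  then obtain i where "i \<in> S" "m \<in> Poly_Mapping.keys (pdiff i p * rhs R i)" by blast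
  moreover from this(2) have "m \<in> {a + b | a b. a \<in> Poly_Mapping.keys (pdiff i p) \<and> b \<in> Poly_Mapping.keys (rhs R i)}"
    using keys_mult by (rule subsetD[rotated])
  ultimately show ?thesis by blast
qed

lemma mdeg1: assumes "mdeg \<mu> = 1" shows "\<exists>a. \<mu> = sp a"
proof -
  have fin: "finite (Poly_Mapping.keys \<mu>)" by simp
  have ne: "Poly_Mapping.keys \<mu> \<noteq> {}" using assms by (auto simp: mdeg_def)
  then obtain a where a: "a \<in> Poly_Mapping.keys \<mu>" by blast
  have "mdeg \<mu> = Poly_Mapping.lookup \<mu> a + (\<Sum>s\<in>Poly_Mapping.keys \<mu> - {a}. Poly_Mapping.lookup \<mu> s)"
    unfolding mdeg_def using fin a by (simp add: sum.remove)
  moreover have "Poly_Mapping.lookup \<mu> a \<ge> 1" using a by (simp add: in_keys_iff)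
  ultimately have 1: "Poly_Mapping.lookup \<mu> a = 1" and 2: "(\<Sum>s\<in>Poly_Mapping.keys \<mu> - {a}. Poly_Mapping.lookup \<mu> s) = 0" using assms by auto
  from 2 fin have "\<forall>s\<in>Poly_Mapping.keys \<mu> - {a}. Poly_Mapping.lookup \<mu> s = 0" by simp
  then have "\<forall>s. s \<noteq> a \<longrightarrow> Poly_Mapping.lookup \<mu> s = 0" by (auto simp: in_keys_iff)
  then have "\<mu> = sp a" unfolding sp_def
    by (intro poly_mapping_eqI) (auto simp: lookup_single when_def 1)
  then show ?thesis by blast
qed

lemma mdeg_sp[simp]: "mdeg (sp a) = 1"
  by (simp add: mdeg_def sp_def)

lemma lookup_sp: "Poly_Mapping.lookup (sp a) b = (if a = b then 1 else 0)"
  by (simp add: sp_def lookup_single when_def)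

lemma sp_inj: "sp a = sp b \<longleftrightarrow> a = b"
  by (metis lookup_sp one_neq_zero)

lemma sp_ne0: "sp a \<noteq> 0"
  by (metis lookup_sp lookup_zero one_neq_zero)

lemma lk_add: "m1 + m2 = m \<Longrightarrow> Poly_Mapping.lookup m1 b + Poly_Mapping.lookup m2 b = Poly_Mapping.lookup m b"
  by (simp add: lookup_add[symmetric])

lemma ex_nz: "m \<noteq> 0 \<Longrightarrow> \<exists>b. Poly_Mapping.lookup m b \<noteq> 0"
proof (rule ccontr)
  assume "m \<noteq> 0" "\<not> (\<exists>b. Poly_Mapping.lookup m b \<noteq> 0)"
  then have "m = 0" by (intro poly_mapping_eqI) simp
  with \<open>m \<noteq> 0\<close> show False by simp
qed

lemma sum_sp: "m1 + m2 = sp a \<Longrightarrow> m2 \<noteq> 0 \<Longrightarrow> m1 = 0 \<and> m2 = sp a"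
proof -
  assume h: "m1 + m2 = sp a" and n: "m2 \<noteq> 0"
  have l: "\<And>b. Poly_Mapping.lookup m1 b + Poly_Mapping.lookup m2 b = (if a = b then 1 else 0)"
    using lk_add[OF h] by (simp add: lookup_sp)
  from ex_nz[OF n] obtain b where b: "Poly_Mapping.lookup m2 b \<noteq> 0" by blast
  then have "b = a" using l[of b] by (auto split: if_splits)
  with l[of a] b have "Poly_Mapping.lookup m1 a = 0" by simp
  then have "m1 = 0"
  proof (intro poly_mapping_eqI)
    fix k assume "Poly_Mapping.lookup m1 a = 0"
    then show "Poly_Mapping.lookup m1 k = Poly_Mapping.lookup 0 k" using l[of k] by (cases "a = k") auto
  qed
  then show ?thesis using h by simp
qed

lemma sum_zero: "m1 + m2 = (0::'a \<Rightarrow>\<^sub>0 nat) \<Longrightarrow> m2 = 0"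
proof -
  assume h: "m1 + m2 = (0::'a \<Rightarrow>\<^sub>0 nat)"
  have "\<And>b. Poly_Mapping.lookup m2 b = 0" using lk_add[OF h] by simp
  then show ?thesis by (intro poly_mapping_eqI) simp
qed

lemma minus_sp: "m' - sp i = 0 \<Longrightarrow> Poly_Mapping.lookup m' i \<noteq> 0 \<Longrightarrow> m' = sp i"
proof -
  assume h: "m' - sp i = 0" "Poly_Mapping.lookup m' i \<noteq> 0"
  have l: "\<And>b. Poly_Mapping.lookup m' b - (if i = b then 1 else 0) = 0"
  proof -
    fix b
    have "Poly_Mapping.lookup (m' - sp i) b = 0" using h(1) by simp
    then show "Poly_Mapping.lookup m' b - (if i = b then 1 else 0) = 0" by (simp add: lookup_minus lookup_sp)
  qed
  show ?thesis
  proof (intro poly_mapping_eqI)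
    fix b show "Poly_Mapping.lookup m' b = Poly_Mapping.lookup (sp i) b"
      using l[of b] h(2) by (cases "i = b") (auto simp: lookup_sp)
  qed
qed

lemma H1_parts:
  assumes "H1 R CC"
  shows "R = (\<Union>c\<in>CC. comp_reactions c)"
    "\<And>c. c \<in> CC \<Longrightarrow> length (comp_subs c) = Suc (length (comp_ints c)) \<and> distinct (comp_enz c # comp_subs c)"
    "intermediates CC \<inter> nonintermediates CC = {}"
  using assms by (simp_all add: H1_def)

lemma F_react:
  assumes "H1 R CC" "r \<in> R"
  shows "fst r \<noteq> 0 \<and> (\<forall>a. fst r = sp a \<longrightarrow> a \<in> intermediates CC \<and>
           (\<exists>Y S. snd r = sp Y + sp S \<and> Y \<in> nonintermediates CC \<and> S \<in> nonintermediates CC))"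
proof -
  from assms H1_parts(1)[OF assms(1)] obtain c where c: "c \<in> CC" "r \<in> comp_reactions c" by blast
  obtain Y Ss Us where cc: "c = (Y, Ss, Us)" by (cases c)
  from H1_parts(2)[OF assms(1) c(1)] cc have len: "length Ss = Suc (length Us)" and d: "distinct (Y # Ss)"
    unfolding comp_subs_def comp_ints_def comp_enz_def by auto
  from c(2) cc obtain j where j: "j < length Us" and
    r: "r = (sp Y + sp (Ss!j), sp (Us!j)) \<or> r = (sp (Us!j), sp Y + sp (Ss!j)) \<or>
        r = (sp (Us!j), sp Y + sp (Ss!Suc j))"
    unfolding comp_reactions_def by auto
  have Yn: "Y \<in> nonintermediates CC" using c(1) cc unfolding nonintermediates_def comp_enz_def by (auto intro!: bexI[of _ c])
  have Sn: "\<And>k. k < length Ss \<Longrightarrow> Ss!k \<in> nonintermediates CC"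
    using c(1) cc unfolding nonintermediates_def comp_subs_def by (auto intro!: bexI[of _ c])
  have Ui: "Us!j \<in> intermediates CC" using c(1) cc j unfolding intermediates_def comp_ints_def by (auto intro!: bexI[of _ c])
  have YS: "Y \<noteq> Ss!j" using d j len by auto
  have nz: "sp Y + sp (Ss!j) \<noteq> 0"
  proof
    assume "sp Y + sp (Ss!j) = 0"
    then have "sp (Ss!j) = 0" by (rule sum_zero)
    then show False using sp_ne0[of "Ss!j"] by simp
  qed
  have nsp: "\<And>a. sp Y + sp (Ss!j) \<noteq> sp a"
  proof
    fix a assume h: "sp Y + sp (Ss!j) = sp a"
    have 1: "Poly_Mapping.lookup (sp Y) Y + Poly_Mapping.lookup (sp (Ss!j)) Y = Poly_Mapping.lookup (sp a) Y"
      by (rule lk_add[OF h])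
    have 2: "Poly_Mapping.lookup (sp Y) (Ss!j) + Poly_Mapping.lookup (sp (Ss!j)) (Ss!j) = Poly_Mapping.lookup (sp a) (Ss!j)"
      by (rule lk_add[OF h])
    have "Poly_Mapping.lookup (sp a) Y = 1" using 1 YS by (simp add: lookup_sp)
    then have "a = Y" by (cases "a = Y") (simp_all add: lookup_sp)
    have "Poly_Mapping.lookup (sp a) (Ss!j) = 1" using 2 YS by (simp add: lookup_sp)
    then have "a = Ss!j" by (cases "a = Ss!j") (simp_all add: lookup_sp)
    with \<open>a = Y\<close> YS show False by simp
  qed
  have Sj: "Ss!j \<in> nonintermediates CC" "Ss!Suc j \<in> nonintermediates CC" using Sn j len by auto
  show ?thesis using r
  proof (elim disjE)
    assume "r = (sp Y + sp (Ss!j), sp (Us!j))" then show ?thesis using nz nsp by simp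
  next
    assume "r = (sp (Us!j), sp Y + sp (Ss!j))" then show ?thesis
      using Ui Yn Sj by (auto simp add: sp_inj sp_ne0)
  next
    assume "r = (sp (Us!j), sp Y + sp (Ss!Suc j))" then show ?thesis
      using Ui Yn Sj by (auto simp add: sp_inj sp_ne0)
  qed
qed

lemma no_const:
  assumes "H1 R CC"
  shows "\<not> appears 0 (tdiff S R p)"
proof
  assume "appears 0 (tdiff S R p)"
  then have "0 \<in> Poly_Mapping.keys (tdiff S R p)" by (simp add: appears_def in_keys_iff)
  from keys_tdiff[OF this] obtain i m1 m2 where h: "0 = m1 + m2" "m2 \<in> Poly_Mapping.keys (rhs R i)" by blast
  from keys_rhs[OF h(2)] obtain r where r: "r \<in> R" "m2 = fst r" by blast
  have "m2 = 0" using h(1) sum_zero by metis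
  with F_react[OF assms r(1)] r(2) show False by simp
qed

lemma lin_step:
  assumes "H1 R CC" "mdeg \<mu> = 1" "\<mu> \<in> Poly_Mapping.keys (tdiff S R p)"
  shows "\<exists>i a r. \<mu> = sp a \<and> sp i \<in> Poly_Mapping.keys p \<and> r \<in> R \<and> fst r = sp a \<and>
            Poly_Mapping.lookup (snd r) i \<noteq> Poly_Mapping.lookup (fst r) i"
proof -
  obtain a where a: "\<mu> = sp a" using mdeg1[OF assms(2)] by blast
  from keys_tdiff[OF assms(3)] obtain i m1 m2 where
    m: "\<mu> = m1 + m2" "m1 \<in> Poly_Mapping.keys (pdiff i p)" "m2 \<in> Poly_Mapping.keys (rhs R i)" by blast
  from keys_rhs[OF m(3)] obtain r where r: "r \<in> R" "m2 = fst r" "Poly_Mapping.lookup (snd r) i \<noteq> Poly_Mapping.lookup (fst r) i" by blast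
  have "m2 \<noteq> 0" using F_react[OF assms(1) r(1)] r(2) by simp
  with m(1) a sum_sp have "m1 = 0" "m2 = sp a" by metis+
  from keys_pdiff[OF m(2)] \<open>m1 = 0\<close> obtain m' where "m' \<in> Poly_Mapping.keys p" "Poly_Mapping.lookup m' i \<noteq> 0" "0 = m' - sp i" by metis
  with minus_sp have "sp i \<in> Poly_Mapping.keys p" by metis
  then show ?thesis using a r \<open>m2 = sp a\<close> by blast
qed

theorem mainTheorem6:
  fixes R :: "'s rxn set" and CC :: "'s comp set" and M :: nat and P :: "nat \<Rightarrow> 's set"
  assumes "H1 R CC" and "H2 CC M P"
  shows "(\<forall>X\<in>net_species CC. \<forall>l::nat\<ge>1.
            \<not> appears 0 ((tdiff (net_species CC) R ^^ l) (xvar X)))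
       \<and> (\<forall>X\<in>nonintermediates CC. \<forall>l::nat\<ge>1. \<forall>\<mu>.
            mdeg \<mu> = 1 \<and> appears \<mu> ((tdiff (net_species CC) R ^^ l) (xvar X))
            \<longrightarrow> (\<exists>W\<in>W_set R CC X. \<mu> = sp W))"
proof (intro conjI ballI allI impI)
  let ?f = "tdiff (net_species CC) R"
  have disj: "intermediates CC \<inter> nonintermediates CC = {}" using assms(1) unfolding H1_def by blast
  fix X and l :: nat assume "1 \<le> l"
  then obtain k where l: "l = Suc k" by (cases l) auto
  show "\<not> appears 0 ((?f ^^ l) (xvar X))" unfolding l using no_const[OF assms(1)] by simp
next
  let ?f = "tdiff (net_species CC) R"
  have disj: "intermediates CC \<inter> nonintermediates CC = {}" using assms(1) unfolding H1_def by blast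
  fix X and l :: nat and \<mu> assume X: "X \<in> nonintermediates CC" and "1 \<le> l"
    and h: "mdeg \<mu> = 1 \<and> appears \<mu> ((?f ^^ l) (xvar X))"
  then obtain k where l: "l = Suc k" by (cases l) auto
  have "\<forall>\<mu>. mdeg \<mu> = 1 \<and> \<mu> \<in> Poly_Mapping.keys ((?f ^^ Suc k) (xvar X)) \<longrightarrow> (\<exists>W\<in>W_set R CC X. \<mu> = sp W)"
  proof (induction k)
    case 0
    show ?case
    proof (intro allI impI)
      fix \<mu> assume "mdeg \<mu> = 1 \<and> \<mu> \<in> Poly_Mapping.keys ((?f ^^ Suc 0) (xvar X))"
      then obtain i a r where A: "\<mu> = sp a" "sp i \<in> Poly_Mapping.keys (xvar X)" "r \<in> R" "fst r = sp a"
        "Poly_Mapping.lookup (snd r) i \<noteq> Poly_Mapping.lookup (fst r) i" using lin_step[OF assms(1)] by fastforce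
      have "sp i = sp X" using A(2) by (simp add: xvar_def sp_def split: if_splits)
      then have "i = X" by (simp add: sp_inj)
      from F_react[OF assms(1) A(3)] A(4) obtain Y S where
        B: "a \<in> intermediates CC" "snd r = sp Y + sp S" "Y \<in> nonintermediates CC" "S \<in> nonintermediates CC"
        by blast
      have "X \<noteq> a" using X B(1) disj by blast
      with A(5) \<open>i = X\<close> A(4) have "Poly_Mapping.lookup (snd r) X \<noteq> 0" by (simp add: lookup_sp)
      with B(2) have "X = Y \<or> X = S" by (auto simp: lookup_add lookup_sp split: if_splits)
      then have "(sp a, sp X + sp S) \<in> R \<or> (sp a, sp X + sp Y) \<in> R"
        using A(3,4) B(2) by (metis add.commute prod.collapse)
      then have "a \<in> W_set R CC X" using B unfolding W_set_def by blast
      then show "\<exists>W\<in>W_set R CC X. \<mu> = sp W" using A(1) by blast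
    qed
  next
    case (Suc k)
    show ?case
    proof (intro allI impI)
      fix \<mu> assume "mdeg \<mu> = 1 \<and> \<mu> \<in> Poly_Mapping.keys ((?f ^^ Suc (Suc k)) (xvar X))"
      then obtain i a r where A: "\<mu> = sp a" "sp i \<in> Poly_Mapping.keys ((?f ^^ Suc k) (xvar X))" "r \<in> R" "fst r = sp a"
        "Poly_Mapping.lookup (snd r) i \<noteq> Poly_Mapping.lookup (fst r) i" using lin_step[OF assms(1)] by fastforce
      from Suc.IH[rule_format, OF conjI[OF mdeg_sp A(2)]] obtain W where W: "W \<in> W_set R CC X" "sp i = sp W" by blast
      then have iW: "i = W" by (simp add: sp_inj)
      have "i \<in> intermediates CC" using W iW unfolding W_set_def by blast
      from F_react[OF assms(1) A(3)] A(4) obtain Y S where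
        B: "a \<in> intermediates CC" "snd r = sp Y + sp S" "Y \<in> nonintermediates CC" "S \<in> nonintermediates CC"
        by blast
      have "i \<noteq> Y" "i \<noteq> S" using B \<open>i \<in> intermediates CC\<close> disj by blast+
      then have "Poly_Mapping.lookup (snd r) i = 0" using B(2) by (simp add: lookup_add lookup_sp)
      with A(5) A(4) have "i = a" by (auto simp: lookup_sp split: if_splits)
      then show "\<exists>W\<in>W_set R CC X. \<mu> = sp W" using A(1) W iW by blast
    qed
  qed
  then show "\<exists>W\<in>W_set R CC X. \<mu> = sp W" using h l by (simp add: appears_def in_keys_iff)
qed

end
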